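(* For any group $A$, the assignment $q\mapsto\mathrm{Ker}(q)$ induces a bijection $$\bigsqcup_{B<A}\mathsf{Desc}^1(\mathsf T^l_{\imath_B},(B,m_B))\;\cong\;\mathsf{Fac}(A),$$ where $B$ ranges over proper subgroups of $A$ and $\imath_B:B\hookrightarrow A$ is the inclusion.
   Context: For a subgroup $B$ of $A$ with inclusion $\imath_B$, $\mathcal Z^1(\mathsf T^l_{\imath_B},(B,m_B))$ is identified with the set of maps $q:A\to B$ satisfying (ZL1) $q(1_A)=1_A$; (ZL2) $q(ba)=b\,q(a)$ for all $a\in A,b\in B$; (ZL3) $q(aa')=q(a\,q(a'))$ for all $a,a'\in A$ (exactly the algebra structures on the left $B$-set $B$ for the monad $A\otimes_B-$). $\mathsf{Desc}^1(\mathsf T^l_{\imath_B},(B,m_B))$ is its quotient by the relation $q\sim q'$ iff there is $b_0\in B$ with $q(a)b_0=q'(ab_0)$ for all $a\in A$ (isomorphism of the corresponding algebras). $\mathrm{Ker}(q)=\{a:q(a)=1_A\}$. $\mathsf{FAC}(A)$ is the set of pairs $(B,X)$ with $B$ a proper subgroup of $A$, $X$ a subgroup of $A$, $B\cap X=\{1_A\}$, $BX=A$; $\mathsf{Fac}(A)$ is its quotient by the equivalence $(B,X)\cong(B',X')$ iff $B=B'$ and $X,X'$ are conjugate in $A$. *)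

theory Defs
  imports "HOL-Algebra.Coset"
begin

text \<open>Z^1(T^l_{i_B},(B,m_B)): maps q : A -> B satisfying (ZL1)-(ZL3).\<close>
definition ZL :: "('a, 'b) monoid_scheme \<Rightarrow> 'a set \<Rightarrow> ('a \<Rightarrow> 'a) set" where
  "ZL G B = {q. q \<in> carrier G \<rightarrow> B
      \<and> q \<one>\<^bsub>G\<^esub> = \<one>\<^bsub>G\<^esub>
      \<and> (\<forall>a\<in>carrier G. \<forall>b\<in>B. q (b \<otimes>\<^bsub>G\<^esub> a) = b \<otimes>\<^bsub>G\<^esub> q a)
      \<and> (\<forall>a\<in>carrier G. \<forall>a'\<in>carrier G. q (a \<otimes>\<^bsub>G\<^esub> a') = q (a \<otimes>\<^bsub>G\<^esub> q a'))}"

definition desc_rel :: "('a, 'b) monoid_scheme \<Rightarrow> 'a set \<Rightarrow> (('a \<Rightarrow> 'a) \<times> ('a \<Rightarrow> 'a)) set" where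
  "desc_rel G B = {(q, q'). q \<in> ZL G B \<and> q' \<in> ZL G B
      \<and> (\<exists>b0\<in>B. \<forall>a\<in>carrier G. q a \<otimes>\<^bsub>G\<^esub> b0 = q' (a \<otimes>\<^bsub>G\<^esub> b0))}"

definition Desc1 :: "('a, 'b) monoid_scheme \<Rightarrow> 'a set \<Rightarrow> ('a \<Rightarrow> 'a) set set" where
  "Desc1 G B = ZL G B // desc_rel G B"

definition KerQ :: "('a, 'b) monoid_scheme \<Rightarrow> ('a \<Rightarrow> 'a) \<Rightarrow> 'a set" where
  "KerQ G q = {a \<in> carrier G. q a = \<one>\<^bsub>G\<^esub>}"

definition FAC :: "('a, 'b) monoid_scheme \<Rightarrow> ('a set \<times> 'a set) set" where
  "FAC G = {(B, X). subgroup B G \<and> B \<noteq> carrier G \<and> subgroup X G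
      \<and> B \<inter> X = {\<one>\<^bsub>G\<^esub>} \<and> B <#>\<^bsub>G\<^esub> X = carrier G}"

definition fac_rel :: "('a, 'b) monoid_scheme \<Rightarrow> (('a set \<times> 'a set) \<times> ('a set \<times> 'a set)) set" where
  "fac_rel G = {((B, X), (B', X')). (B, X) \<in> FAC G \<and> (B', X') \<in> FAC G \<and> B = B'
      \<and> (\<exists>g\<in>carrier G. X' = (g <#\<^bsub>G\<^esub> X) #>\<^bsub>G\<^esub> inv\<^bsub>G\<^esub> g)}"

definition Fac :: "('a, 'b) monoid_scheme \<Rightarrow> ('a set \<times> 'a set) set set" where
  "Fac G = FAC G // fac_rel G"

definition ker_map :: "('a, 'b) monoid_scheme \<Rightarrow> 'a set \<times> ('a \<Rightarrow> 'a) set \<Rightarrow> ('a set \<times> 'a set) set" where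
  "ker_map G BQ = the_elem ((\<lambda>q. fac_rel G `` {(fst BQ, KerQ G q)}) ` snd BQ)"

end

theory Submission
  imports Defs
begin

context group
begin

lemma cancel1: "a \<in> carrier G \<Longrightarrow> b \<in> carrier G \<Longrightarrow> a \<otimes> (inv a \<otimes> b) = b"
  by (simp add: m_assoc[symmetric])

lemma cancel2: "a \<in> carrier G \<Longrightarrow> b \<in> carrier G \<Longrightarrow> inv a \<otimes> (a \<otimes> b) = b"
  by (simp add: m_assoc[symmetric])

lemma conjset: "X \<subseteq> carrier G \<Longrightarrow> (g <# X) #> h = (\<lambda>x. g \<otimes> x \<otimes> h) ` X"
  unfolding l_coset_def r_coset_def by auto

lemma ZL_D:
  assumes "q \<in> ZL G B"
  shows "\<And>a. a \<in> carrier G \<Longrightarrow> q a \<in> B" "q \<one> = \<one>"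
    "\<And>a b. a \<in> carrier G \<Longrightarrow> b \<in> B \<Longrightarrow> q (b \<otimes> a) = b \<otimes> q a"
    "\<And>a a'. a \<in> carrier G \<Longrightarrow> a' \<in> carrier G \<Longrightarrow> q (a \<otimes> a') = q (a \<otimes> q a')"
  using assms unfolding ZL_def by auto

lemma ZL_B: assumes "subgroup B G" "q \<in> ZL G B" "b \<in> B" shows "q b = b"
proof -
  have bc: "b \<in> carrier G" using assms subgroup.subset by blast
  have "q (b \<otimes> \<one>) = b \<otimes> q \<one>" using ZL_D(3)[OF assms(2)] assms(3) by simp
  thus ?thesis using ZL_D(2)[OF assms(2)] bc by simp
qed

lemma ZL_uniq:
  assumes "subgroup B G" "q \<in> ZL G B" "b \<in> B" "a \<in> carrier G" "inv b \<otimes> a \<in> KerQ G q"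
  shows "q a = b"
proof -
  have bc: "b \<in> carrier G" using assms subgroup.subset by blast
  have "a = b \<otimes> (inv b \<otimes> a)" using bc assms(4) by (simp add: m_assoc[symmetric])
  hence "q a = b \<otimes> q (inv b \<otimes> a)" using ZL_D(3)[OF assms(2), of "inv b \<otimes> a" b] assms bc by simp
  thus ?thesis using assms(5) bc unfolding KerQ_def by simp
qed

lemma ZL_dec:
  assumes "subgroup B G" "q \<in> ZL G B" "a \<in> carrier G"
  shows "inv (q a) \<otimes> a \<in> KerQ G q"
proof -
  have qa: "q a \<in> B" "q a \<in> carrier G" using ZL_D(1)[OF assms(2) assms(3)] assms(1) subgroup.subset by blast+
  have "inv (q a) \<in> B" using qa assms(1) subgroup.m_inv_closed by fastforce
  hence "q (inv (q a) \<otimes> a) = inv (q a) \<otimes> q a" using ZL_D(3)[OF assms(2) assms(3)] by simp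
  thus ?thesis using qa assms unfolding KerQ_def by simp
qed

lemma ZL_ker_sub:
  assumes "subgroup B G" "q \<in> ZL G B"
  shows "subgroup (KerQ G q) G"
proof (rule subgroupI)
  show "KerQ G q \<subseteq> carrier G" unfolding KerQ_def by auto
  show "KerQ G q \<noteq> {}" using ZL_D(2)[OF assms(2)] unfolding KerQ_def by auto
  fix a a' assume a: "a \<in> KerQ G q" and a': "a' \<in> KerQ G q"
  hence ac: "a \<in> carrier G" "q a = \<one>" "a' \<in> carrier G" "q a' = \<one>" unfolding KerQ_def by auto
  have "q (inv a \<otimes> a) = q (inv a \<otimes> q a)" using ZL_D(4)[OF assms(2), of "inv a" a] ac by simp
  hence "q (inv a) = \<one>" using ac ZL_D(2)[OF assms(2)] by simp
  thus "inv a \<in> KerQ G q" using ac unfolding KerQ_def by simp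
  have "q (a \<otimes> a') = q (a \<otimes> q a')" using ZL_D(4)[OF assms(2)] ac by simp
  thus "a \<otimes> a' \<in> KerQ G q" using ac unfolding KerQ_def by simp
qed

lemma ZL_FAC:
  assumes "subgroup B G" "B \<noteq> carrier G" "q \<in> ZL G B"
  shows "(B, KerQ G q) \<in> FAC G"
proof -
  have "B \<inter> KerQ G q = {\<one>}"
  proof
    show "B \<inter> KerQ G q \<subseteq> {\<one>}" using ZL_B[OF assms(1,3)] unfolding KerQ_def by auto
    show "{\<one>} \<subseteq> B \<inter> KerQ G q" using ZL_D(2)[OF assms(3)] assms(1) subgroup.one_closed
      unfolding KerQ_def by fastforce
  qed
  moreover have "B <#> KerQ G q = carrier G"
  proof
    show "B <#> KerQ G q \<subseteq> carrier G" unfolding set_mult_def KerQ_def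
      using assms(1) subgroup.subset by fastforce
    show "carrier G \<subseteq> B <#> KerQ G q"
    proof
      fix a assume a: "a \<in> carrier G"
      have qa: "q a \<in> B" "q a \<in> carrier G" using ZL_D(1)[OF assms(3) a] assms(1) subgroup.subset by blast+
      have "a = q a \<otimes> (inv (q a) \<otimes> a)" using qa a by (simp add: m_assoc[symmetric])
      thus "a \<in> B <#> KerQ G q" unfolding set_mult_def using qa ZL_dec[OF assms(1,3) a] by blast
    qed
  qed
  ultimately show ?thesis unfolding FAC_def using assms ZL_ker_sub[OF assms(1,3)] by auto
qed

lemma desc_equiv: assumes "subgroup B G" shows "equiv (ZL G B) (desc_rel G B)"
proof (rule equivI)
  have Bc: "\<And>b. b \<in> B \<Longrightarrow> b \<in> carrier G" using assms subgroup.subset by blast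
  show "desc_rel G B \<subseteq> ZL G B \<times> ZL G B" unfolding desc_rel_def by auto
  show "refl_on (ZL G B) (desc_rel G B)"
  proof (rule refl_onI)
    fix q assume q: "q \<in> ZL G B"
    have "\<forall>a\<in>carrier G. q a \<otimes> \<one> = q (a \<otimes> \<one>)" using ZL_D(1)[OF q] Bc by simp
    thus "(q, q) \<in> desc_rel G B" unfolding desc_rel_def using q assms subgroup.one_closed by blast
  qed
  show "sym (desc_rel G B)"
  proof (rule symI)
    fix q q' assume "(q, q') \<in> desc_rel G B"
    then obtain b0 where q: "q \<in> ZL G B" "q' \<in> ZL G B" and b0: "b0 \<in> B"
      and h: "\<forall>a\<in>carrier G. q a \<otimes> b0 = q' (a \<otimes> b0)" unfolding desc_rel_def by auto
    have b0c: "b0 \<in> carrier G" using Bc b0 .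
    have "\<forall>a\<in>carrier G. q' a \<otimes> inv b0 = q (a \<otimes> inv b0)"
    proof
      fix a assume a: "a \<in> carrier G"
      have "q (a \<otimes> inv b0) \<otimes> b0 = q' (a \<otimes> inv b0 \<otimes> b0)" using h a b0c by simp
      also have "\<dots> = q' a" using a b0c by (simp add: m_assoc)
      finally show "q' a \<otimes> inv b0 = q (a \<otimes> inv b0)"
        using ZL_D(1)[OF q(1), of "a \<otimes> inv b0"] a b0c Bc
        by (metis inv_closed inv_solve_right m_closed)
    qed
    moreover have "inv b0 \<in> B" using b0 assms subgroup.m_inv_closed by fastforce
    ultimately show "(q', q) \<in> desc_rel G B" unfolding desc_rel_def using q by blast
  qed
  show "trans (desc_rel G B)"
  proof (rule transI)
    fix q q' q'' assume "(q, q') \<in> desc_rel G B" "(q', q'') \<in> desc_rel G B"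
    then obtain b0 b1 where q: "q \<in> ZL G B" "q' \<in> ZL G B" "q'' \<in> ZL G B" and b: "b0 \<in> B" "b1 \<in> B"
      and h: "\<forall>a\<in>carrier G. q a \<otimes> b0 = q' (a \<otimes> b0)"
      and h': "\<forall>a\<in>carrier G. q' a \<otimes> b1 = q'' (a \<otimes> b1)" unfolding desc_rel_def by auto
    have bc: "b0 \<in> carrier G" "b1 \<in> carrier G" using Bc b by auto
    have "\<forall>a\<in>carrier G. q a \<otimes> (b0 \<otimes> b1) = q'' (a \<otimes> (b0 \<otimes> b1))"
    proof
      fix a assume a: "a \<in> carrier G"
      have "q a \<otimes> (b0 \<otimes> b1) = q' (a \<otimes> b0) \<otimes> b1"
      proof -
        have "q a \<in> carrier G" using ZL_D(1)[OF q(1) a] Bc by blast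
        hence "q a \<otimes> (b0 \<otimes> b1) = (q a \<otimes> b0) \<otimes> b1" using bc by (simp add: m_assoc)
        thus ?thesis using h a by simp
      qed
      also have "\<dots> = q'' (a \<otimes> b0 \<otimes> b1)" using h' a bc by simp
      finally show "q a \<otimes> (b0 \<otimes> b1) = q'' (a \<otimes> (b0 \<otimes> b1))" using a bc by (simp add: m_assoc)
    qed
    moreover have "b0 \<otimes> b1 \<in> B" using b assms subgroup.m_closed by fastforce
    ultimately show "(q, q'') \<in> desc_rel G B" unfolding desc_rel_def using q by blast
  qed
qed

lemma desc_fac:
  assumes "subgroup B G" "B \<noteq> carrier G" "(q, q') \<in> desc_rel G B"
  shows "((B, KerQ G q), (B, KerQ G q')) \<in> fac_rel G"
proof -
  obtain b0 where q: "q \<in> ZL G B" "q' \<in> ZL G B" and b0: "b0 \<in> B"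
      and h: "\<forall>a\<in>carrier G. q a \<otimes> b0 = q' (a \<otimes> b0)" using assms(3) unfolding desc_rel_def by auto
  have Bc: "\<And>b. b \<in> B \<Longrightarrow> b \<in> carrier G" using assms subgroup.subset by blast
  have bc: "b0 \<in> carrier G" using Bc b0 .
  have ib: "inv b0 \<in> B" using b0 assms subgroup.m_inv_closed by fastforce
  have "KerQ G q' = (\<lambda>x. inv b0 \<otimes> x \<otimes> b0) ` KerQ G q"
  proof
    show "KerQ G q' \<subseteq> (\<lambda>x. inv b0 \<otimes> x \<otimes> b0) ` KerQ G q"
    proof
      fix a assume "a \<in> KerQ G q'"
      hence a: "a \<in> carrier G" "q' a = \<one>" unfolding KerQ_def by auto
      let ?x = "b0 \<otimes> a \<otimes> inv b0"
      have xc: "?x \<in> carrier G" using a bc by simp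
      have "q ?x \<otimes> b0 = q' (b0 \<otimes> a)" using h xc a bc by (simp add: m_assoc)
      also have "\<dots> = b0" using ZL_D(3)[OF q(2) a(1) b0] a bc by simp
      finally have "q ?x = \<one>" using ZL_D(1)[OF q(1) xc] Bc bc
        by (metis l_one one_closed r_cancel_one)
      hence "?x \<in> KerQ G q" using xc unfolding KerQ_def by simp
      moreover have "a = inv b0 \<otimes> ?x \<otimes> b0" using a bc by (simp add: m_assoc) (simp add: m_assoc[symmetric])
      ultimately show "a \<in> (\<lambda>x. inv b0 \<otimes> x \<otimes> b0) ` KerQ G q" by blast
    qed
    show "(\<lambda>x. inv b0 \<otimes> x \<otimes> b0) ` KerQ G q \<subseteq> KerQ G q'"
    proof
      fix y assume "y \<in> (\<lambda>x. inv b0 \<otimes> x \<otimes> b0) ` KerQ G q"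
      then obtain x where x: "x \<in> carrier G" "q x = \<one>" and y: "y = inv b0 \<otimes> x \<otimes> b0"
        unfolding KerQ_def by auto
      have "q' y = inv b0 \<otimes> q' (x \<otimes> b0)" using ZL_D(3)[OF q(2), of "x \<otimes> b0" "inv b0"] ib x bc y
        by (simp add: m_assoc)
      also have "\<dots> = \<one>"
      proof -
        have "q' (x \<otimes> b0) = b0" using h x bc by (metis l_one)
        thus ?thesis using bc by simp
      qed
      finally show "y \<in> KerQ G q'" using y x bc unfolding KerQ_def by simp
    qed
  qed
  hence "KerQ G q' = (inv b0 <# KerQ G q) #> inv (inv b0)"
    using conjset[of "KerQ G q" "inv b0" "inv (inv b0)"] bc unfolding KerQ_def by auto
  thus ?thesis unfolding fac_rel_def using ZL_FAC[OF assms(1,2)] q ib bc by blast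
qed

lemma conj_comp:
  assumes "X \<subseteq> carrier G" "g \<in> carrier G" "h \<in> carrier G"
  shows "(\<lambda>y. h \<otimes> y \<otimes> inv h) ` ((\<lambda>x. g \<otimes> x \<otimes> inv g) ` X) = (\<lambda>x. (h \<otimes> g) \<otimes> x \<otimes> inv (h \<otimes> g)) ` X"
  unfolding image_image
proof (rule image_cong[OF refl])
  fix x assume "x \<in> X"
  hence x: "x \<in> carrier G" using assms by auto
  show "h \<otimes> (g \<otimes> x \<otimes> inv g) \<otimes> inv h = h \<otimes> g \<otimes> x \<otimes> inv (h \<otimes> g)"
    using x assms by (simp add: m_assoc inv_mult_group)
qed

lemma conj_one: "X \<subseteq> carrier G \<Longrightarrow> (\<lambda>x. \<one> \<otimes> x \<otimes> inv \<one>) ` X = X"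
  by (auto simp: subset_iff)

lemma fac_equiv: "equiv (FAC G) (fac_rel G)"
proof (rule equivI)
  have sub: "\<And>B X. (B, X) \<in> FAC G \<Longrightarrow> X \<subseteq> carrier G" unfolding FAC_def
    using subgroup.subset by blast
  show "fac_rel G \<subseteq> FAC G \<times> FAC G" unfolding fac_rel_def by auto
  show "refl_on (FAC G) (fac_rel G)"
  proof (rule refl_onI)
    fix p assume p: "p \<in> FAC G"
    obtain B X where pe: "p = (B, X)" by force
    have "X = (\<one> <# X) #> inv \<one>" using conjset[of X \<one> "inv \<one>"] sub p pe conj_one by auto
    thus "(p, p) \<in> fac_rel G" unfolding fac_rel_def using p pe by blast
  qed
  show "sym (fac_rel G)"
  proof (rule symI)
    fix p p' assume "(p, p') \<in> fac_rel G"
    then obtain B X X' g where e: "p = (B, X)" "p' = (B, X')" and f: "(B, X) \<in> FAC G" "(B, X') \<in> FAC G"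
      and g: "g \<in> carrier G" and X': "X' = (g <# X) #> inv g" unfolding fac_rel_def by auto
    have X'i: "X' = (\<lambda>x. g \<otimes> x \<otimes> inv g) ` X" using X' conjset sub f by auto
    have "(\<lambda>y. inv g \<otimes> y \<otimes> inv (inv g)) ` X' = X"
      using conj_comp[of X g "inv g"] sub[OF f(1)] g X'i conj_one[of X] by simp
    hence "X = (inv g <# X') #> inv (inv g)" using conjset sub f by auto
    hence "\<exists>k\<in>carrier G. X = (k <# X') #> inv k" using g inv_closed by blast
    thus "(p', p) \<in> fac_rel G" unfolding fac_rel_def using e f by auto
  qed
  show "trans (fac_rel G)"
  proof (rule transI)
    fix p p' p'' assume "(p, p') \<in> fac_rel G" "(p', p'') \<in> fac_rel G"
    then obtain B X X' X'' g h where e: "p = (B, X)" "p' = (B, X')" "p'' = (B, X'')"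
      and f: "(B, X) \<in> FAC G" "(B, X') \<in> FAC G" "(B, X'') \<in> FAC G"
      and g: "g \<in> carrier G" "h \<in> carrier G" and X': "X' = (g <# X) #> inv g"
      and X'': "X'' = (h <# X') #> inv h" unfolding fac_rel_def by auto
    have X'i: "X' = (\<lambda>x. g \<otimes> x \<otimes> inv g) ` X" using X' conjset sub f by auto
    have X''i: "X'' = (\<lambda>x. h \<otimes> x \<otimes> inv h) ` X'" using X'' conjset sub f by auto
    have "X'' = (\<lambda>x. (h \<otimes> g) \<otimes> x \<otimes> inv (h \<otimes> g)) ` X"
      using conj_comp[of X g h] sub[OF f(1)] g X'i X''i by simp
    hence "X'' = ((h \<otimes> g) <# X) #> inv (h \<otimes> g)" using conjset sub f by auto
    thus "(p, p'') \<in> fac_rel G" unfolding fac_rel_def using e f g by auto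
  qed
qed

lemma FAC_q:
  assumes "(B, X) \<in> FAC G"
  shows "\<exists>q\<in>ZL G B. KerQ G q = X"
proof -
  have B: "subgroup B G" and X: "subgroup X G" and BX: "B \<inter> X = {\<one>}" and prod: "B <#> X = carrier G"
    using assms unfolding FAC_def by auto
  have Bc: "\<And>b. b \<in> B \<Longrightarrow> b \<in> carrier G" using B subgroup.subset by blast
  have Xc: "\<And>b. b \<in> X \<Longrightarrow> b \<in> carrier G" using X subgroup.subset by blast
  have uniq: "b = b'" if "b \<in> B" "b' \<in> B" "inv b \<otimes> a \<in> X" "inv b' \<otimes> a \<in> X" "a \<in> carrier G" for b b' a
  proof -
    have bc: "b \<in> carrier G" "b' \<in> carrier G" using that Bc by auto
    have "(inv b' \<otimes> a) \<otimes> inv (inv b \<otimes> a) \<in> X" using that X subgroup.m_closed subgroup.m_inv_closed by metis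
    moreover have "(inv b' \<otimes> a) \<otimes> inv (inv b \<otimes> a) = inv b' \<otimes> b"
      using bc that(5) by (simp add: inv_mult_group m_assoc cancel1)
    moreover have "inv b' \<otimes> b \<in> B" using that B subgroup.m_closed subgroup.m_inv_closed by metis
    ultimately have "inv b' \<otimes> b \<in> B \<inter> X" by simp
    hence "inv b' \<otimes> b = \<one>" using BX by simp
    thus ?thesis using bc by (metis inv_equality inv_inv inv_closed)
  qed
  have ex: "\<exists>!b. b \<in> B \<and> inv b \<otimes> a \<in> X" if a: "a \<in> carrier G" for a
  proof -
    have "a \<in> (\<Union>h\<in>B. \<Union>k\<in>X. {h \<otimes> k})" using a prod unfolding set_mult_def by simp
    then obtain b x where bx: "b \<in> B" "x \<in> X" "a = b \<otimes> x" by blast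
    hence "inv b \<otimes> a = x" using Bc Xc cancel2 by simp
    hence bb: "b \<in> B \<and> inv b \<otimes> a \<in> X" using bx by simp
    show ?thesis
    proof (rule ex1I[of _ b])
      show "b \<in> B \<and> inv b \<otimes> a \<in> X" using bb .
      fix b' assume "b' \<in> B \<and> inv b' \<otimes> a \<in> X"
      thus "b' = b" using uniq[of b' b a] bb a by simp
    qed
  qed
  define q where "q a = (THE b. b \<in> B \<and> inv b \<otimes> a \<in> X)" for a
  have qp: "q a \<in> B \<and> inv (q a) \<otimes> a \<in> X" if "a \<in> carrier G" for a
    unfolding q_def using theI'[OF ex[OF that]] .
  have qu: "q a = b" if "a \<in> carrier G" "b \<in> B" "inv b \<otimes> a \<in> X" for a b
    using uniq[OF qp[OF that(1), THEN conjunct1] that(2) qp[OF that(1), THEN conjunct2] that(3) that(1)] by simp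
  have qc: "q a \<in> carrier G" if "a \<in> carrier G" for a using qp[OF that] Bc by blast
  have "q \<in> ZL G B"
    unfolding ZL_def
  proof (intro CollectI conjI ballI)
    show "q \<in> carrier G \<rightarrow> B" using qp by auto
    have o1: "\<one> \<in> B" "\<one> \<in> X" using B X subgroup.one_closed by auto
    hence "inv \<one> \<otimes> \<one> \<in> X" by simp
    thus "q \<one> = \<one>" using qu[OF one_closed o1(1)] by simp
    fix a assume a: "a \<in> carrier G"
    { fix b assume b: "b \<in> B"
      have "inv (b \<otimes> q a) \<otimes> (b \<otimes> a) = inv (q a) \<otimes> a"
        using a b Bc qc by (simp add: inv_mult_group m_assoc cancel2)
      moreover have "b \<otimes> q a \<in> B" using b qp[OF a] B subgroup.m_closed by metis
      moreover have "b \<otimes> a \<in> carrier G" using a b Bc by simp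
      ultimately show "q (b \<otimes> a) = b \<otimes> q a" using qu[of "b \<otimes> a" "b \<otimes> q a"] qp[OF a] by metis }
    fix a' assume a': "a' \<in> carrier G"
    let ?c = "q (a \<otimes> q a')"
    have cc: "?c \<in> B" "?c \<in> carrier G" using qp qc a a' by auto
    have "(inv ?c \<otimes> (a \<otimes> q a')) \<otimes> (inv (q a') \<otimes> a') \<in> X"
    proof -
      have "a \<otimes> q a' \<in> carrier G" using a a' qc by simp
      hence "inv ?c \<otimes> (a \<otimes> q a') \<in> X" using qp by blast
      moreover have "inv (q a') \<otimes> a' \<in> X" using qp[OF a'] by blast
      ultimately show ?thesis using X subgroup.m_closed by fastforce
    qed
    moreover have "(inv ?c \<otimes> (a \<otimes> q a')) \<otimes> (inv (q a') \<otimes> a') = inv ?c \<otimes> (a \<otimes> a')"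
      using cc a a' qc by (simp add: m_assoc cancel1 qc)
    ultimately have "inv ?c \<otimes> (a \<otimes> a') \<in> X" by simp
    thus "q (a \<otimes> a') = q (a \<otimes> q a')" using qu[of "a \<otimes> a'" ?c] cc(1) a a' m_closed by blast
  qed
  moreover have "KerQ G q = X"
  proof
    show "KerQ G q \<subseteq> X"
    proof
      fix x assume "x \<in> KerQ G q"
      hence x: "x \<in> carrier G" "q x = \<one>" unfolding KerQ_def by auto
      have "inv (q x) \<otimes> x \<in> X" using qp[OF x(1)] by blast
      thus "x \<in> X" using x by simp
    qed
    show "X \<subseteq> KerQ G q"
    proof
      fix x assume x: "x \<in> X"
      have o1: "\<one> \<in> B" using B subgroup.one_closed by auto
      have "inv \<one> \<otimes> x \<in> X" using x Xc[OF x] by simp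
      hence "q x = \<one>" using qu[OF Xc[OF x] o1] by simp
      thus "x \<in> KerQ G q" unfolding KerQ_def using Xc[OF x] by simp
    qed
  qed
  ultimately show ?thesis by blast
qed

lemma km:
  assumes "subgroup B G" "B \<noteq> carrier G" "q \<in> ZL G B"
  shows "ker_map G (B, desc_rel G B `` {q}) = fac_rel G `` {(B, KerQ G q)}"
proof -
  let ?f = "\<lambda>q. fac_rel G `` {(B, KerQ G q)}"
  have "?f ` (desc_rel G B `` {q}) = {?f q}"
  proof
    show "?f ` (desc_rel G B `` {q}) \<subseteq> {?f q}"
    proof
      fix Y assume "Y \<in> ?f ` (desc_rel G B `` {q})"
      then obtain q' where q': "(q, q') \<in> desc_rel G B" and Y: "Y = ?f q'" by auto
      have "((B, KerQ G q), (B, KerQ G q')) \<in> fac_rel G" using desc_fac[OF assms(1,2) q'] .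
      hence "?f q = ?f q'" using equiv_class_eq[OF fac_equiv] by blast
      thus "Y \<in> {?f q}" using Y by simp
    qed
    show "{?f q} \<subseteq> ?f ` (desc_rel G B `` {q})"
      using equiv_class_self[OF desc_equiv[OF assms(1)] assms(3)] by blast
  qed
  thus ?thesis unfolding ker_map_def by simp
qed

lemma conj_desc:
  assumes B: "subgroup B G" and q: "q \<in> ZL G B" and q': "q' \<in> ZL G B" and g: "g \<in> carrier G"
    and K: "KerQ G q' = (\<lambda>x. g \<otimes> x \<otimes> inv g) ` KerQ G q"
  shows "(q, q') \<in> desc_rel G B"
proof -
  have Bc: "\<And>b. b \<in> B \<Longrightarrow> b \<in> carrier G" using B subgroup.subset by blast
  have Ksub: "subgroup (KerQ G q) G" using ZL_ker_sub[OF B q] .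
  have Kc: "\<And>x. x \<in> KerQ G q \<Longrightarrow> x \<in> carrier G" unfolding KerQ_def by auto
  define b where "b = q g"
  define x0 where "x0 = inv b \<otimes> g"
  have b: "b \<in> B" "b \<in> carrier G" unfolding b_def using ZL_D(1)[OF q g] Bc by auto
  have x0: "x0 \<in> KerQ G q" unfolding x0_def b_def using ZL_dec[OF B q g] .
  have x0c: "x0 \<in> carrier G" using Kc x0 .
  have gb: "g = b \<otimes> x0" unfolding x0_def using b g cancel1 by simp
  have ib: "inv b \<in> B" using b B subgroup.m_inv_closed by fastforce
  have "\<forall>a\<in>carrier G. q a \<otimes> inv b = q' (a \<otimes> inv b)"
  proof
    fix a assume a: "a \<in> carrier G"
    have qa: "q a \<in> B" "q a \<in> carrier G" using ZL_D(1)[OF q a] Bc by auto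
    define y where "y = inv (q a) \<otimes> a"
    have y: "y \<in> KerQ G q" unfolding y_def using ZL_dec[OF B q a] .
    have yc: "y \<in> carrier G" using Kc y .
    have z: "inv x0 \<otimes> y \<otimes> x0 \<in> KerQ G q"
      using Ksub x0 y subgroup.m_closed subgroup.m_inv_closed by metis
    have e1: "inv (q a \<otimes> inv b) \<otimes> (a \<otimes> inv b) = g \<otimes> (inv x0 \<otimes> y \<otimes> x0) \<otimes> inv g"
      unfolding gb y_def using qa a b x0c by (simp add: m_assoc inv_mult_group cancel1)
    have "inv (q a \<otimes> inv b) \<otimes> (a \<otimes> inv b) \<in> KerQ G q'" unfolding e1 K using z by blast
    moreover have "q a \<otimes> inv b \<in> B" using qa ib B subgroup.m_closed by metis
    ultimately show "q a \<otimes> inv b = q' (a \<otimes> inv b)"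
      using ZL_uniq[OF B q', of "q a \<otimes> inv b" "a \<otimes> inv b"] a b by simp
  qed
  thus ?thesis unfolding desc_rel_def using q q' ib by blast
qed

end


theorem theorem4p9:
  fixes G :: "('a, 'b) monoid_scheme"
  assumes "group G"
  shows "(\<forall>B. subgroup B G \<and> B \<noteq> carrier G \<longrightarrow> (\<forall>q\<in>ZL G B. (B, KerQ G q) \<in> FAC G))
    \<and> (\<forall>B. subgroup B G \<and> B \<noteq> carrier G \<longrightarrow>
         (\<forall>q q'. (q, q') \<in> desc_rel G B \<longrightarrow> ((B, KerQ G q), (B, KerQ G q')) \<in> fac_rel G))
    \<and> bij_betw (ker_map G) (SIGMA B:{B. subgroup B G \<and> B \<noteq> carrier G}. Desc1 G B) (Fac G)"
proof -
  interpret group G by fact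
  let ?S = "SIGMA B:{B. subgroup B G \<and> B \<noteq> carrier G}. Desc1 G B"
  have p1: "\<forall>B. subgroup B G \<and> B \<noteq> carrier G \<longrightarrow> (\<forall>q\<in>ZL G B. (B, KerQ G q) \<in> FAC G)"
    using ZL_FAC by blast
  have p2: "\<forall>B. subgroup B G \<and> B \<noteq> carrier G \<longrightarrow>
         (\<forall>q q'. (q, q') \<in> desc_rel G B \<longrightarrow> ((B, KerQ G q), (B, KerQ G q')) \<in> fac_rel G)"
    using desc_fac by blast
  have rep: "\<exists>q\<in>ZL G B. C = desc_rel G B `` {q} \<and> subgroup B G \<and> B \<noteq> carrier G" if "(B, C) \<in> ?S" for B C
    using that unfolding Desc1_def by (auto elim!: quotientE)
  have inj: "inj_on (ker_map G) ?S"
  proof (rule inj_onI)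
    fix p p' assume p: "p \<in> ?S" and p': "p' \<in> ?S" and e: "ker_map G p = ker_map G p'"
    obtain B C where pe: "p = (B, C)" by force
    obtain B' C' where pe': "p' = (B', C')" by force
    obtain q where q: "q \<in> ZL G B" "C = desc_rel G B `` {q}" "subgroup B G" "B \<noteq> carrier G"
      using rep p pe by blast
    obtain q' where q': "q' \<in> ZL G B'" "C' = desc_rel G B' `` {q'}" "subgroup B' G" "B' \<noteq> carrier G"
      using rep p' pe' by blast
    have "fac_rel G `` {(B, KerQ G q)} = fac_rel G `` {(B', KerQ G q')}"
      using e km[OF q(3,4,1)] km[OF q'(3,4,1)] pe pe' q(2) q'(2) by simp
    hence "((B, KerQ G q), (B', KerQ G q')) \<in> fac_rel G"
      using eq_equiv_class[OF _ fac_equiv ZL_FAC[OF q'(3,4,1)]] by blast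
    then obtain g where BB: "B = B'" and g: "g \<in> carrier G"
      and K: "KerQ G q' = (g <#\<^bsub>G\<^esub> KerQ G q) #>\<^bsub>G\<^esub> inv\<^bsub>G\<^esub> g" unfolding fac_rel_def by blast
    have "KerQ G q' = (\<lambda>x. g \<otimes>\<^bsub>G\<^esub> x \<otimes>\<^bsub>G\<^esub> inv\<^bsub>G\<^esub> g) ` KerQ G q"
      using K conjset[of "KerQ G q" g "inv\<^bsub>G\<^esub> g"] unfolding KerQ_def by auto
    hence "(q, q') \<in> desc_rel G B" using conj_desc[OF q(3,1)] q'(1) BB g by blast
    hence "C = C'" using equiv_class_eq[OF desc_equiv[OF q(3)]] q(2) q'(2) BB by blast
    thus "p = p'" using pe pe' BB by simp
  qed
  have img: "ker_map G ` ?S = Fac G"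
  proof
    show "ker_map G ` ?S \<subseteq> Fac G"
    proof
      fix Y assume "Y \<in> ker_map G ` ?S"
      then obtain B C where p: "(B, C) \<in> ?S" and Y: "Y = ker_map G (B, C)" by auto
      obtain q where q: "q \<in> ZL G B" "C = desc_rel G B `` {q}" "subgroup B G" "B \<noteq> carrier G"
        using rep p by blast
      have "Y = fac_rel G `` {(B, KerQ G q)}" using Y q km[OF q(3,4,1)] by simp
      moreover have "fac_rel G `` {(B, KerQ G q)} \<in> FAC G // fac_rel G"
        by (rule quotientI[OF ZL_FAC[OF q(3,4,1)]])
      ultimately show "Y \<in> Fac G" unfolding Fac_def by simp
    qed
    show "Fac G \<subseteq> ker_map G ` ?S"
    proof
      fix Y assume "Y \<in> Fac G"
      then obtain p where p: "p \<in> FAC G" and Y: "Y = fac_rel G `` {p}" unfolding Fac_def by (rule quotientE) blast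
      obtain B X where pe: "p = (B, X)" by force
      have BX: "subgroup B G" "B \<noteq> carrier G" using p pe unfolding FAC_def by auto
      obtain q where q: "q \<in> ZL G B" "KerQ G q = X" using FAC_q p pe by blast
      have "desc_rel G B `` {q} \<in> ZL G B // desc_rel G B" by (rule quotientI[OF q(1)])
      hence m: "(B, desc_rel G B `` {q}) \<in> ?S" unfolding Desc1_def using BX by simp
      have k: "Y = ker_map G (B, desc_rel G B `` {q})" using km[OF BX q(1)] q(2) Y pe by simp
      show "Y \<in> ker_map G ` ?S" by (rule image_eqI[of Y "ker_map G", OF k m])
    qed
  qed
  have "bij_betw (ker_map G) ?S (Fac G)" unfolding bij_betw_def using inj img by (rule conjI)
  thus ?thesis using p1 p2 by (intro conjI)
qed

end
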